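(* For every integer $k\ge1$, every $n\ge2$ and every $\sigma\in(-1,0)$, \[ \mathbb{E}[D_n^k]=-\frac{k!}{2\pi i}\int_{\sigma-i\infty}^{\sigma+i\infty}\frac{\Gamma(s)\Gamma(n)/\Gamma(n+s)}{\big(\psi(1-s)-\psi(1)\big)^k}\,ds, \] where the integral converges absolutely.
   Context: $D_n$ is the absorption time at state 1 of the continuous-time Markov chain on $\{1,2,\dots\}$ started at $n$ that jumps from $m$ to $i$ at rate $1/(m-i)$ for $1\le i\le m-1$. $\psi=\Gamma'/\Gamma$ is the digamma function. *)

theory Defs
  imports "HOL-Probability.Probability"
begin

text \<open>The continuous-time Markov chain on the positive integers which jumps from m to i
  (for 1 <= i <= m-1) at rate 1/(m-i); state 1 is absorbing.  It is described by its
  standard jump-chain / holding-time construction.\<close>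

definition jump_rate :: "nat \<Rightarrow> nat \<Rightarrow> real" where
  "jump_rate m i = (if 1 \<le> i \<and> i < m then 1 / real (m - i) else 0)"

definition total_rate :: "nat \<Rightarrow> real" where
  "total_rate m = (\<Sum>i\<in>{1..<m}. jump_rate m i)"

definition jump_paths :: "nat \<Rightarrow> nat list set" where
  "jump_paths n = {ms. ms \<noteq> [] \<and> hd ms = n \<and> last ms = 1 \<and> sorted_wrt (>) ms}"

definition path_prob :: "nat list \<Rightarrow> real" where
  "path_prob ms = (\<Prod>j<length ms - 1. jump_rate (ms ! j) (ms ! Suc j) / total_rate (ms ! j))"

definition holding_measure :: "nat list \<Rightarrow> (nat \<Rightarrow> real) measure" where
  "holding_measure ms = PiM {..<length ms - 1}
      (\<lambda>j. density lborel (exponential_density (total_rate (ms ! j))))"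

text \<open>k-th moment of the absorption time D_n: conditioning on the jump path,
  D_n is the sum of the holding times.\<close>
definition D_moment :: "nat \<Rightarrow> nat \<Rightarrow> real" where
  "D_moment n k = (\<Sum>ms\<in>jump_paths n. path_prob ms *
      (\<integral>t. (\<Sum>j<length ms - 1. t j) ^ k \<partial>holding_measure ms))"

end

theory Submission
  imports Defs "HOL-Complex_Analysis.Complex_Analysis" "HOL-Computational_Algebra.Formal_Power_Series"
begin


lemma T_ident:
  "(\<Sum>p<N. real (p choose j) / real (N - p)) = real (N choose j) * (harm N - harm j)"
proof (induction N arbitrary: j)
  case 0
  then show ?case by (cases j) auto
next
  case (Suc N)
  have sh: "(\<Sum>p<Suc N. real (p choose j) / real (Suc N - p))
      = real (0 choose j) / real (Suc N) + (\<Sum>p<N. real (Suc p choose j) / real (N - p))"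
    by (subst sum.lessThan_Suc_shift) simp
  show ?case
  proof (cases j)
    case 0
    have h0: "harm 0 = (0::real)" by (simp add: harm_def)
    have "(\<Sum>p<N. real (Suc p choose j) / real (N - p)) = harm N"
      using Suc.IH[of 0] 0 h0 by simp
    then show ?thesis using sh 0 h0 by (simp add: harm_Suc inverse_eq_divide)
  next
    case (Suc j')
    have "(\<Sum>p<N. real (Suc p choose j) / real (N - p))
        = (\<Sum>p<N. real (p choose j') / real (N - p)) + (\<Sum>p<N. real (p choose j) / real (N - p))"
      unfolding Suc by (simp add: sum.distrib[symmetric] add_divide_distrib)
    also have "\<dots> = real (N choose j') * (harm N - harm j') + real (N choose j) * (harm N - harm j)"
      using Suc.IH by simp
    finally have e: "(\<Sum>p<N. real (Suc p choose j) / real (N - p)) =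
       real (N choose j') * (harm N - harm j') + real (N choose j) * (harm N - harm j)" .
    have b1: "real (Suc N choose j) = real (N choose j') + real (N choose j)"
      unfolding Suc by simp
    have b2: "real (Suc j') * real (Suc N choose j) = real (Suc N) * real (N choose j')"
      unfolding Suc by (metis Suc_times_binomial of_nat_mult)
    have hj: "harm j = harm j' + 1 / real (Suc j')" unfolding Suc by (simp add: harm_Suc inverse_eq_divide)
    have hN: "harm (Suc N) = harm N + 1 / real (Suc N)" by (simp add: harm_Suc inverse_eq_divide)
    have "real (N choose j') * (harm N - harm j') + real (N choose j) * (harm N - harm j)
       = real (Suc N choose j) * (harm (Suc N) - harm j)"
    proof -
      have x: "real (Suc N choose j) / real (Suc N) = real (N choose j') / real (Suc j')"
        using b2 by (simp add: field_simps)
      have alg: "\<And>A B C h g u v::real. C = A + B \<Longrightarrow> C * u = A * v \<Longrightarrow>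
         A * (h - g) + B * (h - (g + v)) = C * ((h + u) - (g + v))"
        by (simp add: algebra_simps)
      show ?thesis unfolding hN hj
        by (rule alg[OF b1]) (use x in \<open>simp add: field_simps\<close>)
    qed
    then show ?thesis using sh e Suc by simp
  qed
qed

lemma harm0: "harm 0 = (0::real)" by (simp add: harm_def)

lemma shift_sum: "(\<Sum>i\<in>{1..<m}. f i) = (\<Sum>p<m-1. f (Suc p))"
proof (cases m)
  case 0 then show ?thesis by simp
next
  case (Suc m') then show ?thesis
    unfolding Suc One_nat_def sum.shift_bounds_Suc_ivl atLeast0LessThan by simp
qed

lemma total_rate_harm: "total_rate m = harm (m - 1)"
proof -
  have "total_rate m = (\<Sum>i\<in>{1..<m}. 1 / real (m - i))"
    unfolding total_rate_def jump_rate_def by (intro sum.cong) auto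
  also have "\<dots> = (\<Sum>p<m-1. 1 / real (m - 1 - p))"
    by (subst shift_sum) simp
  also have "\<dots> = (\<Sum>p<m-1. real (p choose 0) / real (m - 1 - p))" by simp
  also have "\<dots> = harm (m - 1)" by (subst T_ident) (simp add: harm0)
  finally show ?thesis .
qed

definition bb :: "nat \<Rightarrow> nat \<Rightarrow> real" where
  "bb m k = (if m = 1 then (if k = 0 then 1 else 0)
     else (\<Sum>j\<in>{1..<m}. (-1)^(j+1) * real ((m-1) choose j) / harm j ^ k))"

lemma bb0: assumes "m \<ge> 1" shows "bb m 0 = 1"
proof (cases "m = 1")
  case False
  then have m2: "m - 1 > 0" using assms by simp
  have "(\<Sum>i\<le>m-1. (-1::real)^i * real ((m-1) choose i)) = 0"
    using choose_alternating_sum[OF m2] by simp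
  also have "(\<Sum>i\<le>m-1. (-1::real)^i * real ((m-1) choose i))
     = 1 + (\<Sum>i\<in>{1..m-1}. (-1::real)^i * real ((m-1) choose i))"
    by (simp add: atMost_atLeast0 sum.atLeast_Suc_atMost)
  finally have "(\<Sum>i\<in>{1..m-1}. (-1::real)^i * real ((m-1) choose i)) = -1" by simp
  moreover have "{1..<m} = {1..m-1}" using assms by auto
  ultimately show ?thesis using False unfolding bb_def
    by (simp add: sum_negf)
qed (simp add: bb_def)

lemma bb_ext: assumes "1 \<le> i" "i \<le> m"
  shows "bb i k = (if i = 1 \<and> k = 0 then 1 else 0) +
     (\<Sum>j\<in>{1..<m}. (-1)^(j+1) * real ((i-1) choose j) / harm j ^ k)"
proof (cases "i = 1")
  case True
  have "(\<Sum>j\<in>{1..<m}. (-1)^(j+1) * real ((i-1) choose j) / harm j ^ k) = (0::real)"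
    using True by (intro sum.neutral) auto
  then show ?thesis using True by (simp add: bb_def)
next
  case False
  have "(\<Sum>j\<in>{1..<m}. (-1)^(j+1) * real ((i-1) choose j) / harm j ^ k)
      = (\<Sum>j\<in>{1..<i}. (-1)^(j+1) * real ((i-1) choose j) / harm j ^ k :: real)"
    using assms by (intro sum.mono_neutral_right) auto
  then show ?thesis using False by (simp add: bb_def)
qed

lemma beta_ident:
  assumes "m \<ge> 2" "k \<ge> 1"
  shows "(\<Sum>i\<in>{1..<m}. bb i k / real (m - i)) = harm (m-1) * bb m k - bb m (k-1)"
proof -
  have "(\<Sum>i\<in>{1..<m}. bb i k / real (m - i)) =
     (\<Sum>i\<in>{1..<m}. \<Sum>j\<in>{1..<m}. (-1)^(j+1) / harm j ^ k * (real ((i-1) choose j) / real (m - i)))"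
  proof (intro sum.cong refl)
    fix i assume i: "i \<in> {1..<m}"
    have "bb i k = (\<Sum>j\<in>{1..<m}. (-1)^(j+1) * real ((i-1) choose j) / harm j ^ k)"
      using bb_ext[of i m k] i assms by simp
    then show "bb i k / real (m - i) = (\<Sum>j\<in>{1..<m}. (-1)^(j+1) / harm j ^ k * (real ((i-1) choose j) / real (m - i)))"
      by (simp add: sum_divide_distrib)
  qed
  also have "\<dots> = (\<Sum>j\<in>{1..<m}. (-1)^(j+1) / harm j ^ k * (\<Sum>i\<in>{1..<m}. real ((i-1) choose j) / real (m - i)))"
    by (subst sum.swap) (simp add: sum_distrib_left)
  also have "\<dots> = (\<Sum>j\<in>{1..<m}. (-1)^(j+1) / harm j ^ k * (real ((m-1) choose j) * (harm (m-1) - harm j)))"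
  proof (intro sum.cong refl)
    fix j
    have "(\<Sum>i\<in>{1..<m}. real ((i-1) choose j) / real (m - i)) = (\<Sum>p<m-1. real (p choose j) / real (m - 1 - p))"
      by (subst shift_sum) simp
    then show "(-1)^(j+1) / harm j ^ k * (\<Sum>i\<in>{1..<m}. real ((i-1) choose j) / real (m - i)) =
          (-1)^(j+1) / harm j ^ k * (real ((m-1) choose j) * (harm (m-1) - harm j))"
      by (simp only: T_ident)
  qed
  also have "\<dots> = harm (m-1) * (\<Sum>j\<in>{1..<m}. (-1)^(j+1) * real ((m-1) choose j) / harm j ^ k)
       - (\<Sum>j\<in>{1..<m}. (-1)^(j+1) * real ((m-1) choose j) / harm j ^ (k-1))"
  proof -
    have "(-1)^(j+1) / harm j ^ k * (real ((m-1) choose j) * (harm (m-1) - harm j)) =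
       harm (m-1) * ((-1)^(j+1) * real ((m-1) choose j) / harm j ^ k)
       - (-1)^(j+1) * real ((m-1) choose j) / harm j ^ (k-1)" if "j \<in> {1..<m}" for j
    proof -
      have hp: "harm j > (0::real)" using that by (intro harm_pos) auto
      have "harm j ^ k = harm j * harm j ^ (k-1)" using assms(2)
        by (metis Suc_diff_le diff_Suc_1 power_Suc)
      moreover have "harm j ^ (k-1) > (0::real)" using hp by simp
      moreover have "\<And>s C Hm hj h::real. hj > 0 \<Longrightarrow> h > 0 \<Longrightarrow>
          s / (hj * h) * (C * (Hm - hj)) = Hm * (s * C / (hj * h)) - s * C / h"
        by (simp add: field_simps)
      ultimately show ?thesis using hp by metis
    qed
    then have "(\<Sum>j\<in>{1..<m}. (-1)^(j+1) / harm j ^ k * (real ((m-1) choose j) * (harm (m-1) - harm j))) =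
       (\<Sum>j\<in>{1..<m}. harm (m-1) * ((-1)^(j+1) * real ((m-1) choose j) / harm j ^ k)
       - (-1)^(j+1) * real ((m-1) choose j) / harm j ^ (k-1))"
      by (intro sum.cong refl) blast
    then show ?thesis by (simp only: sum_subtractf sum_distrib_left)
  qed
  also have "\<dots> = harm (m-1) * bb m k - bb m (k-1)" using assms by (simp add: bb_def)
  finally show ?thesis .
qed

lemma telescope_lemma:
  fixes \<beta> c :: "nat \<Rightarrow> real" and H :: real
  assumes "H > 0" "\<beta> 0 = H" "\<And>k. k \<ge> 1 \<Longrightarrow> \<beta> k = H * c k - c (k-1)" "c 0 = 1"
  shows "(\<Sum>a\<le>k. \<beta> (k - a) / H^(a+1)) = c k"
proof (induction k)
  case 0
  then show ?case using assms by simp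
next
  case (Suc k)
  have "(\<Sum>a\<le>Suc k. \<beta> (Suc k - a) / H^(a+1)) = \<beta> (Suc k) / H + (\<Sum>a\<le>k. \<beta> (k - a) / H^(a+1)) / H"
    by (subst sum.atMost_Suc_shift) (simp add: sum_divide_distrib field_simps)
  also have "\<dots> = c (Suc k)" using Suc.IH assms(1) assms(3)[of "Suc k"] by (simp add: field_simps)
  finally show ?case .
qed

lemma sorted_le_hd: "sorted_wrt (>) (ms::nat list) \<Longrightarrow> x \<in> set ms \<Longrightarrow> x \<le> hd ms"
  by (cases ms) auto

lemma jp_0: "jump_paths 0 = {}"
proof -
  have False if "ms \<in> jump_paths 0" for ms
  proof -
    from that have "ms \<noteq> []" "hd ms = 0" "last ms = 1" "sorted_wrt (>) ms" by (auto simp: jump_paths_def)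
    then show False using sorted_le_hd[of ms "last ms"] last_in_set[of ms] by simp
  qed
  then show ?thesis by auto
qed

lemma jp_1: "jump_paths 1 = {[1]}"
proof -
  have "ms = [1]" if ms: "ms \<in> jump_paths 1" for ms
  proof -
    from ms have ne: "ms \<noteq> []" and h: "hd ms = 1" and l: "last ms = 1" and s: "sorted_wrt (>) ms"
      by (auto simp: jump_paths_def)
    obtain xs where ms': "ms = 1 # xs" using ne h by (cases ms) auto
    have "xs = []"
    proof (rule ccontr)
      assume "xs \<noteq> []"
      then have "last xs \<in> set xs" by (rule last_in_set)
      moreover have "last xs = 1" using l ms' \<open>xs \<noteq> []\<close> by simp
      moreover have "\<forall>y\<in>set xs. y < 1" using s ms' by simp
      ultimately show False by (metis less_irrefl)
    qed
    then show ?thesis using ms' by simp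
  qed
  moreover have "[1] \<in> jump_paths 1" by (simp add: jump_paths_def)
  ultimately show ?thesis by blast
qed

lemma jp_1': "jump_paths (Suc 0) = {[Suc 0]}" using jp_1 by simp

lemma jp_step:
  assumes "m \<ge> 2"
  shows "jump_paths m = (\<Union>i\<in>{1..<m}. (#) m ` jump_paths i)"
proof (intro equalityI subsetI)
  fix ms assume ms: "ms \<in> jump_paths m"
  then obtain xs where xs: "ms = m # xs" by (cases ms) (auto simp: jump_paths_def)
  have "xs \<noteq> []" using ms xs assms by (auto simp: jump_paths_def)
  have srt: "\<forall>y\<in>set xs. y < m" "sorted_wrt (>) xs" using ms xs by (auto simp: jump_paths_def)
  have lst: "last xs = 1" using ms xs \<open>xs \<noteq> []\<close> by (auto simp: jump_paths_def)
  have "hd xs \<in> set xs" using \<open>xs \<noteq> []\<close> by simp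
  then have "hd xs < m" using srt by auto
  moreover have "1 \<le> hd xs" using sorted_le_hd[OF srt(2), of "last xs"] last_in_set[OF \<open>xs \<noteq> []\<close>] lst by simp
  moreover have "xs \<in> jump_paths (hd xs)" using \<open>xs \<noteq> []\<close> srt lst by (simp add: jump_paths_def)
  ultimately show "ms \<in> (\<Union>i\<in>{1..<m}. (#) m ` jump_paths i)" using xs by auto
next
  fix ms assume "ms \<in> (\<Union>i\<in>{1..<m}. (#) m ` jump_paths i)"
  then obtain i xs where i: "1 \<le> i" "i < m" and xs: "xs \<in> jump_paths i" and ms: "ms = m # xs" by auto
  have "xs \<noteq> []" "hd xs = i" "last xs = 1" "sorted_wrt (>) xs" using xs by (auto simp: jump_paths_def)
  moreover have "\<forall>y\<in>set xs. y < m" using sorted_le_hd[OF \<open>sorted_wrt (>) xs\<close>] \<open>hd xs = i\<close> i by fastforce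
  ultimately show "ms \<in> jump_paths m" using ms by (simp add: jump_paths_def)
qed

lemma jp_finite: "finite (jump_paths m)"
proof (induction m rule: less_induct)
  case (less m)
  consider "m = 0" | "m = 1" | "m \<ge> 2" by linarith
  then show ?case
  proof cases
    case 1 then show ?thesis by (simp add: jp_0)
  next
    case 2 then show ?thesis by (simp add: jp_1 jp_1')
  next
    case 3
    have "finite (\<Union>i\<in>{1..<m}. (#) m ` jump_paths i)"
      using less.IH by (intro finite_UN_I) auto
    then show ?thesis by (subst jp_step[OF 3])
  qed
qed

lemma jp_nonempty_tl: "xs \<in> jump_paths i \<Longrightarrow> xs \<noteq> []" by (simp add: jump_paths_def)

definition Gf :: "real \<Rightarrow> real fps" where "Gf c = Abs_fps (\<lambda>a. (1/c)^a)"
definition Wf :: "nat list \<Rightarrow> real fps" where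
  "Wf ms = (\<Prod>j<length ms - 1. Gf (total_rate (ms!j)))"

lemma Wf_cons: "ms \<noteq> [] \<Longrightarrow> Wf (m # ms) = Gf (total_rate m) * Wf ms"
proof -
  assume "ms \<noteq> []"
  then obtain n where n: "length ms = Suc n" by (cases ms) auto
  show ?thesis unfolding Wf_def using n by (simp add: prod.lessThan_Suc_shift del: prod.lessThan_Suc)
qed

lemma pp_cons: "ms \<noteq> [] \<Longrightarrow> path_prob (m # ms) = jump_rate m (hd ms) / total_rate m * path_prob ms"
proof -
  assume ne: "ms \<noteq> []"
  then obtain n where n: "length ms = Suc n" by (cases ms) auto
  show ?thesis unfolding path_prob_def using n ne
    by (simp add: prod.lessThan_Suc_shift hd_conv_nth del: prod.lessThan_Suc)
qed

lemma Gf_mult_nth: "fps_nth (Gf c * X) k = (\<Sum>a\<le>k. (1/c)^a * fps_nth X (k - a))"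
  by (simp add: fps_mult_nth Gf_def atLeast0AtMost)

lemma aux1: "(1::real) / y / H * ((1/H)^a * b) = b / y / H^(a+1)"
  by (simp add: power_one_over divide_inverse power_add inverse_mult_distrib mult_ac power_inverse)

lemma aux2: "(1::real) / y / H * (\<Sum>a\<le>k. (1/H)^a * f a) = (\<Sum>a\<le>k. f a / y / H^(a+1))"
  by (subst sum_distrib_left) (rule sum.cong[OF refl], rule aux1)

lemma main_comb: "m \<ge> 1 \<Longrightarrow> (\<Sum>ms\<in>jump_paths m. path_prob ms * fps_nth (Wf ms) k) = bb m k"
proof (induction m arbitrary: k rule: less_induct)
  case (less m)
  show ?case
  proof (cases "m = 1")
    case True
    have "fps_nth (1::real fps) k = (if k = 0 then 1 else 0)" by simp
    then show ?thesis unfolding True jp_1 by (simp add: path_prob_def Wf_def bb_def)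
  next
    case False
    then have m2: "m \<ge> 2" using less.prems by simp
    define H where "H = total_rate m"
    have H: "H = harm (m-1)" unfolding H_def by (rule total_rate_harm)
    have Hpos: "H > 0" unfolding H using m2 by (intro harm_pos) simp
    define \<beta> where "\<beta> k' = (\<Sum>i\<in>{1..<m}. bb i k' / real (m - i))" for k'
    have inj: "inj_on ((#) m) (jump_paths i)" for i by (rule inj_onI) simp
    have disj: "\<forall>i\<in>{1..<m}. \<forall>j\<in>{1..<m}. i \<noteq> j \<longrightarrow> (#) m ` jump_paths i \<inter> (#) m ` jump_paths j = {}"
      by (auto simp: jump_paths_def)
    have "(\<Sum>ms\<in>jump_paths m. path_prob ms * fps_nth (Wf ms) k) =
        (\<Sum>i\<in>{1..<m}. \<Sum>ms\<in>(#) m ` jump_paths i. path_prob ms * fps_nth (Wf ms) k)"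
      unfolding jp_step[OF m2]
      by (rule sum.UNION_disjoint) (use disj in \<open>auto simp: jp_finite\<close>)
    also have "\<dots> = (\<Sum>i\<in>{1..<m}. \<Sum>xs\<in>jump_paths i. path_prob (m # xs) * fps_nth (Wf (m # xs)) k)"
      by (simp add: sum.reindex[OF inj])
    also have "\<dots> = (\<Sum>i\<in>{1..<m}. \<Sum>xs\<in>jump_paths i. 1 / real (m - i) / H *
          (\<Sum>a\<le>k. (1/H)^a * (path_prob xs * fps_nth (Wf xs) (k - a))))"
    proof (intro sum.cong refl)
      fix i xs assume i: "i \<in> {1..<m}" and xs: "xs \<in> jump_paths i"
      have ne: "xs \<noteq> []" and hd: "hd xs = i" using xs by (auto simp: jump_paths_def)
      have jr: "jump_rate m i = 1 / real (m - i)" using i by (simp add: jump_rate_def)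
      have "path_prob (m # xs) * fps_nth (Wf (m # xs)) k = 1 / real (m - i) / H * path_prob xs *
          (\<Sum>a\<le>k. (1/H)^a * fps_nth (Wf xs) (k - a))"
        unfolding pp_cons[OF ne] Wf_cons[OF ne] Gf_mult_nth hd H_def[symmetric] jr by (rule refl)
      also have "\<dots> = 1 / real (m - i) / H *
          (\<Sum>a\<le>k. (1/H)^a * (path_prob xs * fps_nth (Wf xs) (k - a)))"
        by (simp only: sum_distrib_left mult.assoc mult.left_commute)
      finally show "path_prob (m # xs) * fps_nth (Wf (m # xs)) k = 1 / real (m - i) / H *
          (\<Sum>a\<le>k. (1/H)^a * (path_prob xs * fps_nth (Wf xs) (k - a)))" .
    qed
    also have "\<dots> = (\<Sum>i\<in>{1..<m}. 1 / real (m - i) / H *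
          (\<Sum>a\<le>k. (1/H)^a * bb i (k - a)))"
    proof (intro sum.cong refl)
      fix i assume i: "i \<in> {1..<m}"
      have "(\<Sum>xs\<in>jump_paths i. 1 / real (m - i) / H * (\<Sum>a\<le>k. (1/H)^a * (path_prob xs * fps_nth (Wf xs) (k - a))))
          = 1 / real (m - i) / H * (\<Sum>a\<le>k. (1/H)^a * (\<Sum>xs\<in>jump_paths i. path_prob xs * fps_nth (Wf xs) (k - a)))"
        by (simp only: sum_distrib_left) (rule sum.swap)
      also have "\<dots> = 1 / real (m - i) / H * (\<Sum>a\<le>k. (1/H)^a * bb i (k - a))"
        using less.IH[of i] i by simp
      finally show "(\<Sum>xs\<in>jump_paths i. 1 / real (m - i) / H * (\<Sum>a\<le>k. (1/H)^a * (path_prob xs * fps_nth (Wf xs) (k - a))))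
          = 1 / real (m - i) / H * (\<Sum>a\<le>k. (1/H)^a * bb i (k - a))" .
    qed
    also have "\<dots> = (\<Sum>a\<le>k. \<beta> (k - a) / H^(a+1))"
    proof -
      have "(\<Sum>i\<in>{1..<m}. 1 / real (m - i) / H * (\<Sum>a\<le>k. (1/H)^a * bb i (k - a)))
         = (\<Sum>i\<in>{1..<m}. \<Sum>a\<le>k. bb i (k - a) / real (m - i) / H^(a+1))"
        by (rule sum.cong[OF refl]) (rule aux2)
      also have "\<dots> = (\<Sum>a\<le>k. \<Sum>i\<in>{1..<m}. bb i (k - a) / real (m - i) / H^(a+1))"
        by (rule sum.swap)
      also have "\<dots> = (\<Sum>a\<le>k. \<beta> (k - a) / H^(a+1))"
        unfolding \<beta>_def by (simp add: sum_divide_distrib)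
      finally show ?thesis .
    qed
    also have "\<dots> = bb m k"
    proof (rule telescope_lemma[OF Hpos])
      have "\<beta> 0 = (\<Sum>i\<in>{1..<m}. 1 / real (m - i))" unfolding \<beta>_def by (intro sum.cong refl) (simp add: bb0)
      also have "\<dots> = H" unfolding H_def total_rate_def jump_rate_def by (intro sum.cong) auto
      finally show "\<beta> 0 = H" .
      show "\<beta> k' = H * bb m k' - bb m (k'-1)" if "k' \<ge> 1" for k'
        unfolding \<beta>_def H using beta_ident[OF m2 that] .
      show "bb m 0 = 1" using bb0 m2 by simp
    qed
    finally show ?thesis .
  qed
qed



lemma exp_AE_nonneg: "AE y in density lborel (exponential_density r). 0 \<le> y"
  by (subst AE_density) (auto simp: exponential_density_def)

lemma mom_exp:
  assumes r: "r > 0" and s: "s \<ge> 0"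
  shows "(\<integral>\<^sup>+y. ennreal ((s + y)^k) \<partial>density lborel (exponential_density r)) =
    ennreal (\<Sum>a\<le>k. real (k choose a) * s^a * (fact (k-a) / r^(k-a)))"
proof -
  have "(\<integral>\<^sup>+y. ennreal ((s + y)^k) \<partial>density lborel (exponential_density r)) =
      (\<integral>\<^sup>+y. ennreal (exponential_density r y) * ennreal ((s + y)^k) \<partial>lborel)"
    by (subst nn_integral_density) auto
  also have "\<dots> = (\<integral>\<^sup>+y. (\<Sum>a\<le>k. ennreal (real (k choose a) * s^a) *
        ennreal (exponential_density r y * y^(k-a))) \<partial>lborel)"
  proof (intro nn_integral_cong)
    fix y :: real
    show "ennreal (exponential_density r y) * ennreal ((s + y)^k) =
      (\<Sum>a\<le>k. ennreal (real (k choose a) * s^a) * ennreal (exponential_density r y * y^(k-a)))"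
    proof (cases "y < 0")
      case True
      then show ?thesis by (simp add: exponential_density_def)
    next
      case False
      have e: "exponential_density r y \<ge> 0" using r by simp
      have "ennreal (exponential_density r y) * ennreal ((s + y)^k) =
          ennreal (exponential_density r y * (s + y)^k)"
        using e False s by (intro ennreal_mult[symmetric]) auto
      also have "exponential_density r y * (s + y)^k =
          (\<Sum>a\<le>k. real (k choose a) * s^a * (exponential_density r y * y^(k-a)))"
        by (simp add: binomial_ring sum_distrib_left mult_ac)
      also have "ennreal \<dots> = (\<Sum>a\<le>k. ennreal (real (k choose a) * s^a * (exponential_density r y * y^(k-a))))"
        using False e s by (subst sum_ennreal) auto
      also have "\<dots> = (\<Sum>a\<le>k. ennreal (real (k choose a) * s^a) * ennreal (exponential_density r y * y^(k-a)))"
        using False e s by (intro sum.cong refl ennreal_mult) auto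
      finally show ?thesis .
    qed
  qed
  also have "\<dots> = (\<Sum>a\<le>k. ennreal (real (k choose a) * s^a) *
        (\<integral>\<^sup>+y. ennreal (exponential_density r y * y^(k-a)) \<partial>lborel))"
    by (subst nn_integral_sum) (auto intro!: sum.cong nn_integral_cmult)
  also have "\<dots> = (\<Sum>a\<le>k. ennreal (real (k choose a) * s^a) * ennreal (fact (k-a) / r^(k-a)))"
    using nn_integral_erlang_ith_moment[OF r, of 0] by simp
  also have "\<dots> = (\<Sum>a\<le>k. ennreal (real (k choose a) * s^a * (fact (k-a) / r^(k-a))))"
    using r s by (intro sum.cong refl ennreal_mult[symmetric]) auto
  also have "\<dots> = ennreal (\<Sum>a\<le>k. real (k choose a) * s^a * (fact (k-a) / r^(k-a)))"
    using r s by (subst sum_ennreal) auto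
  finally show ?thesis .
qed

lemma Q_nonneg:
  fixes r :: "nat \<Rightarrow> real" and L k :: nat
  assumes r: "\<And>j. r j > 0"
  shows "fps_nth (\<Prod>j<L. Gf (r j)) k \<ge> 0"
proof (induction L arbitrary: k)
  case 0 then show ?case by simp
next
  case (Suc L)
  show ?case unfolding prod.lessThan_Suc fps_mult_nth
    using Suc r by (intro sum_nonneg mult_nonneg_nonneg) (auto simp: Gf_def less_imp_le)
qed

lemma AE_PiM_nonneg:
  fixes r :: "nat \<Rightarrow> real" and L :: nat
  assumes r: "\<And>j. r j > 0"
  shows "AE x in PiM {..<L} (\<lambda>j. density lborel (exponential_density (r j))). \<forall>j\<in>{..<L}. 0 \<le> x j"
proof (rule AE_finite_allI[where Q="\<lambda>j x. 0 \<le> x j", OF finite_lessThan])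
  fix j assume j: "j \<in> {..<L}"
  show "AE x in PiM {..<L} (\<lambda>j. density lborel (exponential_density (r j))). 0 \<le> x j"
    by (rule AE_PiM_component[OF _ j]) (auto intro: prob_space_exponential_density r exp_AE_nonneg)
qed

lemma meas_sum_pow:
  assumes "J \<subseteq> I"
  shows "(\<lambda>x. ennreal ((\<Sum>j\<in>J. x j)^a)) \<in> borel_measurable (PiM I (\<lambda>j. density lborel (f j)))"
proof -
  have "(\<lambda>x. (\<Sum>j\<in>J. x j)^a) \<in> borel_measurable (PiM I (\<lambda>j. density lborel (f j)))"
  proof (intro borel_measurable_power borel_measurable_sum)
    fix j assume "j \<in> J"
    then have "(\<lambda>x. x j) \<in> measurable (PiM I (\<lambda>j. density lborel (f j))) (density lborel (f j))"
      using assms by (intro measurable_component_singleton) auto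
    moreover have "measurable (PiM I (\<lambda>j. density lborel (f j))) (density lborel (f j)) =
        borel_measurable (PiM I (\<lambda>j. density lborel (f j)))"
      by (rule measurable_cong_sets) auto
    ultimately show "(\<lambda>x. x j) \<in> borel_measurable (PiM I (\<lambda>j. density lborel (f j)))" by simp
  qed
  then show ?thesis by (rule measurable_compose[OF _ measurable_ennreal])
qed

lemma mom_prod:
  fixes r :: "nat \<Rightarrow> real"
  assumes r: "\<And>j. r j > 0"
  shows "(\<integral>\<^sup>+x. ennreal ((\<Sum>j<L. x j)^k) \<partial>PiM {..<L} (\<lambda>j. density lborel (exponential_density (r j))))
     = ennreal (fact k * fps_nth (\<Prod>j<L. Gf (r j)) k)"
proof -
  define M where "M = (\<lambda>j. density lborel (exponential_density (r j)))"
  interpret P: product_prob_space M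
    unfolding M_def by (intro product_prob_spaceI prob_space_exponential_density r)
  have "(\<integral>\<^sup>+x. ennreal ((\<Sum>j<L. x j)^k) \<partial>PiM {..<L} M) = ennreal (fact k * fps_nth (\<Prod>j<L. Gf (r j)) k)"
  proof (induction L arbitrary: k)
  case 0
  have ps: "prob_space (PiM {} M)" by (rule prob_space_PiM) (simp add: M_def prob_space_exponential_density r)
  have "(\<integral>\<^sup>+x. ennreal ((\<Sum>j<0. x j)^k) \<partial>PiM {..<0} M) = ennreal (0^k)"
    using prob_space.emeasure_space_1[OF ps] by (simp add: nn_integral_const)
  then show ?case by (cases k) auto
next
  case (Suc L)
  have aeL: "AE x in PiM {..<L} M. \<forall>j\<in>{..<L}. 0 \<le> x j"
    unfolding M_def by (rule AE_PiM_nonneg[of r L]) (rule r)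
  define c where "c a = real (k choose a) * (fact (k-a) / r L^(k-a))" for a
  have "(\<integral>\<^sup>+x. ennreal ((\<Sum>j<Suc L. x j)^k) \<partial>PiM {..<Suc L} M) =
      (\<integral>\<^sup>+x. ennreal ((\<Sum>j<Suc L. x j)^k) \<partial>PiM (insert L {..<L}) M)"
    by (simp add: lessThan_Suc)
  also have "\<dots> = (\<integral>\<^sup>+x. (\<integral>\<^sup>+y. ennreal ((\<Sum>j<Suc L. (x(L := y)) j)^k) \<partial>M L) \<partial>PiM {..<L} M)"
  proof -
    have "(\<lambda>x. (\<Sum>j<Suc L. x j)^k) \<in> borel_measurable (PiM (insert L {..<L}) M)"
    proof (intro borel_measurable_power borel_measurable_sum)
      fix j assume "j \<in> {..<Suc L}"
      then have "(\<lambda>x. x j) \<in> measurable (PiM (insert L {..<L}) M) (M j)"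
        by (intro measurable_component_singleton) auto
      moreover have "measurable (PiM (insert L {..<L}) M) (M j) = borel_measurable (PiM (insert L {..<L}) M)"
        by (rule measurable_cong_sets) (auto simp: M_def)
      ultimately show "(\<lambda>x. x j) \<in> borel_measurable (PiM (insert L {..<L}) M)" by simp
    qed
    then have meas: "(\<lambda>x. ennreal ((\<Sum>j<Suc L. x j)^k)) \<in> borel_measurable (PiM (insert L {..<L}) M)"
      by (rule measurable_compose[OF _ measurable_ennreal])
    show ?thesis by (rule P.product_nn_integral_insert[OF _ _ meas]) auto
  qed
  also have "\<dots> = (\<integral>\<^sup>+x. (\<integral>\<^sup>+y. ennreal (((\<Sum>j<L. x j) + y)^k) \<partial>M L) \<partial>PiM {..<L} M)"
    by (simp add: lessThan_Suc add.commute)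
  also have "\<dots> = (\<integral>\<^sup>+x. ennreal (\<Sum>a\<le>k. c a * (\<Sum>j<L. x j)^a) \<partial>PiM {..<L} M)"
  proof (rule nn_integral_cong_AE)
    show "AE x in PiM {..<L} M. (\<integral>\<^sup>+y. ennreal (((\<Sum>j<L. x j) + y)^k) \<partial>M L) =
        ennreal (\<Sum>a\<le>k. c a * (\<Sum>j<L. x j)^a)"
      using aeL
    proof (eventually_elim)
      case (elim x)
      then have "(\<Sum>j<L. x j) \<ge> 0" by (intro sum_nonneg) auto
      then show ?case unfolding M_def c_def using r
        by (subst mom_exp) (auto intro!: arg_cong[where f=ennreal] sum.cong simp: mult_ac)
    qed
  qed
  also have "\<dots> = (\<integral>\<^sup>+x. (\<Sum>a\<le>k. ennreal (c a) * ennreal ((\<Sum>j<L. x j)^a)) \<partial>PiM {..<L} M)"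
  proof (rule nn_integral_cong_AE)
    have cpos: "c a \<ge> 0" for a unfolding c_def using r by (simp add: less_imp_le)
    show "AE x in PiM {..<L} M. ennreal (\<Sum>a\<le>k. c a * (\<Sum>j<L. x j)^a) =
        (\<Sum>a\<le>k. ennreal (c a) * ennreal ((\<Sum>j<L. x j)^a))"
      using aeL
    proof (eventually_elim)
      case (elim x)
      then have sx: "(\<Sum>j<L. x j) \<ge> 0" by (intro sum_nonneg) auto
      have "ennreal (\<Sum>a\<le>k. c a * (\<Sum>j<L. x j)^a) = (\<Sum>a\<le>k. ennreal (c a * (\<Sum>j<L. x j)^a))"
        using sx cpos by (intro sum_ennreal[symmetric]) auto
      also have "\<dots> = (\<Sum>a\<le>k. ennreal (c a) * ennreal ((\<Sum>j<L. x j)^a))"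
        using sx cpos by (intro sum.cong refl ennreal_mult) auto
      finally show ?case .
    qed
  qed
  also have "\<dots> = (\<Sum>a\<le>k. ennreal (c a) * (\<integral>\<^sup>+x. ennreal ((\<Sum>j<L. x j)^a) \<partial>PiM {..<L} M))"
  proof -
    have mE[measurable]: "(\<lambda>x. ennreal ((\<Sum>j<L. x j)^a)) \<in> borel_measurable (PiM {..<L} M)" for a
      unfolding M_def by (rule meas_sum_pow) simp
    show ?thesis by (subst nn_integral_sum) (auto intro!: sum.cong nn_integral_cmult)
  qed
  also have "\<dots> = (\<Sum>a\<le>k. ennreal (c a) * ennreal (fact a * fps_nth (\<Prod>j<L. Gf (r j)) a))"
    using Suc.IH by simp
  also have "\<dots> = ennreal (\<Sum>a\<le>k. c a * (fact a * fps_nth (\<Prod>j<L. Gf (r j)) a))"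
  proof -
    have cpos: "c a \<ge> 0" for a unfolding c_def using r by (simp add: less_imp_le)
    have qpos: "fact a * fps_nth (\<Prod>j<L. Gf (r j)) a \<ge> 0" for a
      using Q_nonneg[of r L a] r by simp
    have "(\<Sum>a\<le>k. ennreal (c a) * ennreal (fact a * fps_nth (\<Prod>j<L. Gf (r j)) a))
       = (\<Sum>a\<le>k. ennreal (c a * (fact a * fps_nth (\<Prod>j<L. Gf (r j)) a)))"
      using cpos qpos by (intro sum.cong refl ennreal_mult[symmetric]) auto
    also have "\<dots> = ennreal (\<Sum>a\<le>k. c a * (fact a * fps_nth (\<Prod>j<L. Gf (r j)) a))"
      using cpos qpos by (intro sum_ennreal) auto
    finally show ?thesis .
  qed
  also have "(\<Sum>a\<le>k. c a * (fact a * fps_nth (\<Prod>j<L. Gf (r j)) a)) = fact k * fps_nth (\<Prod>j<Suc L. Gf (r j)) k"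
  proof -
    have "fact k * fps_nth (\<Prod>j<Suc L. Gf (r j)) k =
        (\<Sum>a\<le>k. fact k * (fps_nth (\<Prod>j<L. Gf (r j)) a * (1 / r L)^(k-a)))"
      by (simp add: fps_mult_nth Gf_def atLeast0AtMost sum_distrib_left)
    also have "\<dots> = (\<Sum>a\<le>k. c a * (fact a * fps_nth (\<Prod>j<L. Gf (r j)) a))"
    proof (intro sum.cong refl)
      fix a assume "a \<in> {..k}"
      then have "fact a * fact (k - a) * real (k choose a) = fact k"
        by (metis atMost_iff binomial_fact_lemma of_nat_fact of_nat_mult)
      then show "fact k * (fps_nth (\<Prod>j<L. Gf (r j)) a * (1 / r L)^(k-a)) =
          c a * (fact a * fps_nth (\<Prod>j<L. Gf (r j)) a)"
        unfolding c_def by (simp add: power_one_over field_simps)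
    qed
    finally show ?thesis by simp
  qed
  finally show ?case .
  qed
  then show ?thesis unfolding M_def .
qed

lemma int_prod:
  fixes r :: "nat \<Rightarrow> real"
  assumes r: "\<And>j. r j > 0"
  shows "(\<integral>x. (\<Sum>j<L. x j)^k \<partial>PiM {..<L} (\<lambda>j. density lborel (exponential_density (r j))))
     = fact k * fps_nth (\<Prod>j<L. Gf (r j)) k"
proof -
  have "(\<integral>x. (\<Sum>j<L. x j)^k \<partial>PiM {..<L} (\<lambda>j. density lborel (exponential_density (r j))))
     = enn2real (\<integral>\<^sup>+x. ennreal ((\<Sum>j<L. x j)^k) \<partial>PiM {..<L} (\<lambda>j. density lborel (exponential_density (r j))))"
  proof (rule integral_eq_nn_integral)
    show "AE x in PiM {..<L} (\<lambda>j. density lborel (exponential_density (r j))). 0 \<le> (\<Sum>j<L. x j)^k"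
      using AE_PiM_nonneg[of r L, OF r] by eventually_elim (auto intro!: zero_le_power sum_nonneg)
  qed measurable
  also have "\<dots> = fact k * fps_nth (\<Prod>j<L. Gf (r j)) k"
  proof -
    have "0 \<le> fact k * fps_nth (\<Prod>j<L. Gf (r j)) k" using Q_nonneg[OF r, where L=L and k=k] by simp
    then show ?thesis by (simp add: mom_prod[OF r])
  qed
  finally show ?thesis .
qed

lemma jp_ge2: assumes "ms \<in> jump_paths n" "j < length ms - 1" shows "ms ! j \<ge> 2"
proof -
  have ne: "ms \<noteq> []" and l: "last ms = 1" and s: "sorted_wrt (>) ms" using assms by (auto simp: jump_paths_def)
  have "ms ! (length ms - 1) < ms ! j" using sorted_wrt_nth_less[OF s, of j "length ms - 1"] assms(2) ne by simp
  moreover have "ms ! (length ms - 1) = 1" using l ne by (simp add: last_conv_nth)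
  ultimately show ?thesis by simp
qed

lemma total_rate_pos: "m \<ge> 2 \<Longrightarrow> total_rate m > 0"
  by (simp add: total_rate_harm harm_pos)

lemma D_moment_closed: assumes "n \<ge> 1" shows "D_moment n k = fact k * bb n k"
proof -
  have "D_moment n k = (\<Sum>ms\<in>jump_paths n. path_prob ms * (fact k * fps_nth (Wf ms) k))"
    unfolding D_moment_def
  proof (intro sum.cong refl arg_cong2[where f="(*)"])
    fix ms assume ms: "ms \<in> jump_paths n"
    define r where "r j = (if j < length ms - 1 then total_rate (ms ! j) else 1)" for j
    have r: "r j > 0" for j unfolding r_def using jp_ge2[OF ms] total_rate_pos by auto
    have "holding_measure ms = PiM {..<length ms - 1} (\<lambda>j. density lborel (exponential_density (r j)))"
      unfolding holding_measure_def by (intro PiM_cong) (auto simp: r_def)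
    moreover have "Wf ms = (\<Prod>j<length ms - 1. Gf (r j))"
      unfolding Wf_def by (intro prod.cong) (auto simp: r_def)
    ultimately show "(\<integral>t. (\<Sum>j<length ms - 1. t j) ^ k \<partial>holding_measure ms) = fact k * fps_nth (Wf ms) k"
      using int_prod[OF r] by simp
  qed
  also have "\<dots> = fact k * (\<Sum>ms\<in>jump_paths n. path_prob ms * fps_nth (Wf ms) k)"
    by (simp add: sum_distrib_left mult_ac)
  also have "\<dots> = fact k * bb n k" using main_comb[OF assms] by simp
  finally show ?thesis .
qed



lemma Re_inverse_le:
  assumes "Re z \<ge> b" "b > 0"
  shows "Re (inverse z) \<le> 1 / b"
proof -
  have pos: "Re z > 0" using assms by simp
  have "Re (inverse z) = Re z / ((Re z)^2 + (Im z)^2)" by simp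
  also have "\<dots> \<le> Re z / (Re z)^2"
    using pos by (intro divide_left_mono mult_pos_pos) (auto intro: add_pos_nonneg)
  also have "\<dots> = 1 / Re z" using pos by (simp add: power2_eq_square)
  also have "\<dots> \<le> 1 / b" using assms pos by (intro divide_left_mono) auto
  finally show ?thesis .
qed

lemma digamma_diff_sums:
  assumes "w \<noteq> 0"
  shows "(\<lambda>m. inverse (of_nat (Suc m)) - inverse (w + of_nat m)) sums (Digamma w - Digamma 1 :: complex)"
proof -
  have "summable (\<lambda>m. inverse (of_nat (Suc m)) - inverse (w + of_nat m))"
    by (rule summable_Digamma[OF assms])
  then show ?thesis by (simp add: Digamma_def summable_sums)
qed

lemma digamma_Re_bound:
  assumes a: "a > 1"
  obtains d where "d > 0" "\<And>w::complex. Re w \<ge> a \<Longrightarrow> Re (Digamma w - Digamma 1) \<ge> d"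
proof -
  define g where "g m = inverse (real (Suc m)) - inverse (a + real m)" for m
  have sg: "summable g" unfolding g_def using a by (intro summable_Digamma) simp
  have gnn: "g m \<ge> 0" for m unfolding g_def using a
    by (simp add: field_simps)
  have g0: "g 0 > 0" unfolding g_def using a by (simp add: field_simps)
  define d where "d = suminf g"
  have dpos: "d > 0" unfolding d_def by (rule suminf_pos2[OF sg gnn g0])
  have "Re (Digamma w - Digamma 1) \<ge> d" if w: "Re w \<ge> a" for w :: complex
  proof -
    have w0: "w \<noteq> 0" using w a by auto
    have s1: "(\<lambda>m. Re (inverse (of_nat (Suc m)) - inverse (w + of_nat m))) sums Re (Digamma w - Digamma 1)"
      by (rule sums_Re[OF digamma_diff_sums[OF w0]])
    have le: "g m \<le> Re (inverse (of_nat (Suc m)) - inverse (w + of_nat m))" for m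
    proof -
      have "Re (inverse (w + of_nat m)) \<le> 1 / (a + real m)"
        using w a by (intro Re_inverse_le) auto
      moreover have "Re (inverse (of_nat (Suc m) :: complex)) = inverse (real (Suc m))"
        by (metis Re_complex_of_real of_real_inverse of_real_of_nat_eq)
      ultimately show ?thesis unfolding g_def by (simp add: inverse_eq_divide)
    qed
    show ?thesis unfolding d_def using sums_le[OF le summable_sums[OF sg] s1] .
  qed
  then show ?thesis using that dpos by blast
qed

definition Phi :: "nat \<Rightarrow> complex \<Rightarrow> complex" where
  "Phi k s = 1 / (Digamma (1 - s) - Digamma 1) ^ k"

lemma Phi_nonzero_denom:
  assumes "Re s < 0"
  shows "Digamma (1 - s) - Digamma 1 \<noteq> (0::complex)"
proof -
  define a where "a = 1 - Re s / 2"
  have a: "a > 1" using assms unfolding a_def by simp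
  obtain d where d: "d > 0" "\<And>w::complex. Re w \<ge> a \<Longrightarrow> Re (Digamma w - Digamma 1) \<ge> d"
    using digamma_Re_bound[OF a] by blast
  have "Re (1 - s) \<ge> a" using assms unfolding a_def by simp
  then have "d \<le> Re (Digamma (1 - s) - Digamma 1)" by (rule d(2))
  then have "Re (Digamma (1 - s) - Digamma 1) > 0" using d(1) by linarith
  then show ?thesis by (metis less_irrefl zero_complex.sel(1))
qed

lemma Phi_holo:
  assumes "c \<le> 0"
  shows "Phi k holomorphic_on {s. Re s < c}"
proof -
  let ?S = "{s. Re s < c}"
  have disj: "(\<lambda>s. 1 - s) ` ?S \<inter> \<int>\<^sub>\<le>\<^sub>0 = {}"
  proof (rule ccontr)
    assume "(\<lambda>s. 1 - s) ` ?S \<inter> \<int>\<^sub>\<le>\<^sub>0 \<noteq> {}"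
    then obtain s where s: "Re s < c" "1 - s \<in> \<int>\<^sub>\<le>\<^sub>0" by auto
    then obtain m :: nat where "1 - s = - of_nat m" by (elim nonpos_Ints_cases')
    then have "Re (1 - s) = - real m" by simp
    then show False using s assms by simp
  qed
  have "(Digamma \<circ> (\<lambda>s. 1 - s)) holomorphic_on ?S"
    by (rule holomorphic_on_compose) (auto intro!: holomorphic_intros holomorphic_on_Polygamma disj)
  then have h: "(\<lambda>s. Digamma (1 - s)) holomorphic_on ?S" by (simp add: o_def)
  have nz: "\<And>s. s \<in> ?S \<Longrightarrow> (Digamma (1 - s) - Digamma 1) ^ k \<noteq> 0"
    using Phi_nonzero_denom assms by fastforce
  show ?thesis unfolding Phi_def[abs_def]
    by (intro holomorphic_intros h nz)
qed

lemma Phi_bound: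
  assumes "\<sigma> < 0"
  obtains B where "B > 0" "\<And>s. Re s \<le> \<sigma> \<Longrightarrow> norm (Phi k s) \<le> B"
proof -
  have a: "1 - \<sigma> > 1" using assms by simp
  obtain d where d: "d > 0" "\<And>w::complex. Re w \<ge> 1 - \<sigma> \<Longrightarrow> Re (Digamma w - Digamma 1) \<ge> d"
    using digamma_Re_bound[OF a] by blast
  have "norm (Phi k s) \<le> 1 / d ^ k" if s: "Re s \<le> \<sigma>" for s
  proof -
    have "Re (1 - s) \<ge> 1 - \<sigma>" using s by simp
    then have "d \<le> Re (Digamma (1 - s) - Digamma 1)" using d by blast
    also have "\<dots> \<le> norm (Digamma (1 - s) - Digamma 1)" by (rule complex_Re_le_cmod)
    finally have dn: "d \<le> norm (Digamma (1 - s) - Digamma 1)" .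
    have "norm (Phi k s) = 1 / norm (Digamma (1 - s) - Digamma 1) ^ k"
      by (simp add: Phi_def norm_divide norm_power)
    also have "\<dots> \<le> 1 / d ^ k"
      using dn d by (intro divide_left_mono power_mono mult_pos_pos zero_less_power) auto
    finally show ?thesis .
  qed
  moreover have "1 / d ^ k > 0" using d by simp
  ultimately show ?thesis using that by blast
qed

definition cfp :: "nat \<Rightarrow> nat \<Rightarrow> complex" where
  "cfp n j = (-1)^j / (fact j * fact (n - 1 - j))"

lemma cfp_Suc: "j < n \<Longrightarrow> cfp (Suc n) j = cfp n j / of_nat (n - j)"
proof -
  assume j: "j < n"
  then have "n - j = Suc (n - 1 - j)" by simp
  then have "fact (n - j) = (of_nat (n - j) :: complex) * fact (n - 1 - j)"
    by (metis fact_Suc of_nat_fact of_nat_mult)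
  then show ?thesis unfolding cfp_def by (simp add: field_simps)
qed

lemma cfp_alt: "n \<ge> 1 \<Longrightarrow> (\<Sum>j\<le>n. cfp (Suc n) j) = 0"
proof -
  assume n: "n \<ge> 1"
  have "(\<Sum>j\<le>n. cfp (Suc n) j) = (\<Sum>j\<le>n. (-1)^j * of_nat (n choose j) / fact n)"
  proof (intro sum.cong refl)
    fix j assume "j \<in> {..n}"
    then have "(of_nat (n choose j) :: complex) = fact n / (fact j * fact (n - j))"
      by (intro binomial_fact) auto
    then show "cfp (Suc n) j = (-1)^j * of_nat (n choose j) / fact n"
      unfolding cfp_def by (simp add: field_simps)
  qed
  also have "\<dots> = (\<Sum>j\<le>n. (-1)^j * of_nat (n choose j)) / fact n"
    by (simp add: sum_divide_distrib)
  also have "(\<Sum>j\<le>n. (-1)^j * of_nat (n choose j) :: complex) = 0"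
    using n by (intro choose_alternating_sum) simp
  finally show ?thesis by simp
qed

lemma partial_frac:
  assumes "n \<ge> 1" "\<And>j. j < n \<Longrightarrow> s + of_nat j \<noteq> 0"
  shows "1 / pochhammer s n = (\<Sum>j<n. cfp n j / (s + of_nat j))"
  using assms
proof (induction n)
  case 0 then show ?case by simp
next
  case (Suc n)
  show ?case
  proof (cases "n = 0")
    case True then show ?thesis by (simp add: cfp_def)
  next
    case False
    then have n1: "n \<ge> 1" by simp
    have nz: "\<And>j. j < Suc n \<Longrightarrow> s + of_nat j \<noteq> 0" using Suc.prems by blast
    have IH: "1 / pochhammer s n = (\<Sum>j<n. cfp n j / (s + of_nat j))"
      using Suc.IH n1 nz by simp
    have sn: "s + of_nat n \<noteq> 0" using nz by simp
    have "1 / pochhammer s (Suc n) = (1 / pochhammer s n) / (s + of_nat n)"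
      by (simp add: pochhammer_Suc)
    also have "\<dots> = (\<Sum>j<n. cfp n j / ((s + of_nat j) * (s + of_nat n)))"
      unfolding IH by (simp add: sum_divide_distrib)
    also have "\<dots> = (\<Sum>j<n. cfp (Suc n) j / (s + of_nat j) - cfp (Suc n) j / (s + of_nat n))"
    proof (intro sum.cong refl)
      fix j assume j: "j \<in> {..<n}"
      have sj: "s + of_nat j \<noteq> 0" using nz j by simp
      have nj: "(of_nat (n - j) :: complex) \<noteq> 0" using j by simp
      have e: "(of_nat (n - j) :: complex) = (s + of_nat n) - (s + of_nat j)"
        using j by (simp add: of_nat_diff)
      show "cfp n j / ((s + of_nat j) * (s + of_nat n)) =
          cfp (Suc n) j / (s + of_nat j) - cfp (Suc n) j / (s + of_nat n)"
      proof -
        have gen: "c / (u * v) = c / (v - u) / u - c / (v - u) / v"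
          if "u \<noteq> 0" "v \<noteq> 0" "v - u \<noteq> 0" for c u v :: complex
        proof -
          have "c / (v - u) / u - c / (v - u) / v = c / (v - u) * (1 / u - 1 / v)"
            by (simp add: divide_inverse algebra_simps)
          also have "1 / u - 1 / v = (v - u) / (u * v)"
            using that by (simp add: diff_frac_eq)
          also have "c / (v - u) * ((v - u) / (u * v)) = c / (u * v)"
            using that by simp
          finally show ?thesis by simp
        qed
        show ?thesis unfolding cfp_Suc[of j n, OF j[simplified]] e
          by (rule gen[OF sj sn]) (use nj e in simp)
      qed
    qed
    also have "\<dots> = (\<Sum>j<n. cfp (Suc n) j / (s + of_nat j)) - (\<Sum>j<n. cfp (Suc n) j) / (s + of_nat n)"
      by (simp add: sum_subtractf sum_divide_distrib)
    also have "(\<Sum>j<n. cfp (Suc n) j) = - cfp (Suc n) n"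
      using cfp_alt[OF n1] by (simp add: lessThan_Suc_atMost[symmetric] add_eq_0_iff)
    finally show ?thesis by simp
  qed
qed

lemma fact_cfp: "j < n \<Longrightarrow> fact (n - 1) * cfp n j = (-1)^j * of_nat ((n - 1) choose j)"
proof -
  assume j: "j < n"
  then have "(of_nat ((n - 1) choose j) :: complex) = fact (n - 1) / (fact j * fact (n - 1 - j))"
    by (intro binomial_fact) auto
  then show ?thesis unfolding cfp_def by simp
qed

lemma norm_poch: "norm (pochhammer (s::complex) n) = (\<Prod>l<n. norm (s + of_nat l :: complex))"
  by (simp add: pochhammer_prod prod_norm atLeast0LessThan)

lemma poch_lower_far:
  fixes s :: complex
  assumes "norm s \<ge> 2 * real n" "n \<ge> 2"
  shows "norm (pochhammer s n) \<ge> (norm s)^2 / 4"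
proof -
  have "(\<Prod>l<n. norm s / 2) \<le> (\<Prod>l<n. norm (s + of_nat l :: complex))"
  proof (intro prod_mono conjI)
    fix l assume l: "l \<in> {..<n}"
    show "0 \<le> norm s / 2" by simp
    have "norm s - real l \<le> norm (s + of_nat l)"
      by (metis norm_diff_ineq norm_of_nat add_diff_cancel_right' diff_add_cancel norm_triangle_ineq4
          order_trans add.commute)
    moreover have "real l \<le> norm s / 2" using l assms by simp
    ultimately show "norm s / 2 \<le> norm (s + of_nat l)" by linarith
  qed
  then have "(norm s / 2) ^ n \<le> norm (pochhammer s n)" by (simp add: norm_poch)
  moreover have "(norm s / 2) ^ 2 \<le> (norm s / 2) ^ n"
    using assms by (intro power_increasing) auto
  moreover have "(norm s)^2 / 4 = (norm s / 2)^2" by (simp add: power2_eq_square)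
  ultimately show ?thesis by linarith
qed

lemma poch_lower_line:
  assumes "-1 < \<sigma>" "\<sigma> < 0" "n \<ge> 2"
  shows "norm (pochhammer (Complex \<sigma> t) n) \<ge> (min (-\<sigma>) (1+\<sigma>))^n * (1 + t^2)"
proof -
  define \<delta> where "\<delta> = min (-\<sigma>) (1+\<sigma>)"
  have d0: "\<delta> > 0" "\<delta> \<le> 1" using assms unfolding \<delta>_def by auto
  define \<rho> where "\<rho> = sqrt (\<delta>^2 + t^2)"
  have rho_d: "\<delta> \<le> \<rho>" unfolding \<rho>_def using d0 by (intro real_le_rsqrt) simp
  have "(\<Prod>l<n. \<rho>) \<le> (\<Prod>l<n. norm (Complex \<sigma> t + of_nat l))"
  proof (intro prod_mono conjI)
    fix l assume l: "l \<in> {..<n}"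
    show "0 \<le> \<rho>" unfolding \<rho>_def by simp
    have "\<delta> \<le> \<bar>\<sigma> + real l\<bar>" unfolding \<delta>_def using assms by (cases "l = 0") auto
    then have "\<delta>^2 \<le> (\<sigma> + real l)^2" using d0
      by (metis abs_le_square_iff abs_of_pos)
    then have "\<rho> \<le> sqrt ((\<sigma> + real l)^2 + t^2)" unfolding \<rho>_def by simp
    also have "sqrt ((\<sigma> + real l)^2 + t^2) = norm (Complex \<sigma> t + of_nat l)"
      by (simp add: cmod_def)
    finally show "\<rho> \<le> norm (Complex \<sigma> t + of_nat l)" .
  qed
  then have P: "\<rho> ^ n \<le> norm (pochhammer (Complex \<sigma> t) n)" by (simp add: norm_poch)
  have n2: "n = 2 + (n - 2)" using assms by simp
  have "\<rho> ^ n = \<rho>^2 * \<rho>^(n-2)" by (subst n2) (simp only: power_add)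
  also have "\<rho>^2 = \<delta>^2 + t^2" unfolding \<rho>_def by simp
  finally have rn: "\<rho> ^ n = (\<delta>^2 + t^2) * \<rho>^(n-2)" .
  have "\<delta>^n = \<delta>^2 * \<delta>^(n-2)" by (subst n2) (simp only: power_add)
  then have "\<delta>^n * (1 + t^2) = (\<delta>^2 + \<delta>^2 * t^2) * \<delta>^(n-2)"
    by (simp add: algebra_simps)
  also have "\<dots> \<le> (\<delta>^2 + t^2) * \<rho>^(n-2)"
  proof (intro mult_mono power_mono)
    have "\<delta>^2 \<le> 1" using d0 by (simp add: power_le_one)
    then have "\<delta>^2 * t^2 \<le> t^2" by (simp add: mult_left_le_one_le)
    then show "\<delta>^2 + \<delta>^2 * t^2 \<le> \<delta>^2 + t^2" by simp
  qed (use d0 rho_d in auto)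
  finally show ?thesis using P rn unfolding \<delta>_def by simp
qed



definition Gfun :: "nat \<Rightarrow> nat \<Rightarrow> complex \<Rightarrow> complex" where
  "Gfun n k s = fact (n - 1) * Phi k s / pochhammer s n"

lemma Gfun_holo:
  assumes "c \<le> 0"
  shows "Gfun n k holomorphic_on ({s. Re s < c} - {s. \<exists>j<n. s = - of_nat j})"
proof -
  have "Phi k holomorphic_on ({s. Re s < c} - {s. \<exists>j<n. s = - of_nat j})"
    by (rule holomorphic_on_subset[OF Phi_holo[OF assms]]) auto
  moreover have "pochhammer s n \<noteq> 0" if "s \<in> {s. Re s < c} - {s. \<exists>j<n. s = - of_nat j}" for s
    using that by (auto simp: pochhammer_eq_0_iff)
  ultimately show ?thesis unfolding Gfun_def[abs_def]
    by (intro holomorphic_intros) auto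
qed

lemma Gfun_bound_far:
  assumes "n \<ge> 2" "Re s \<le> \<sigma>" "norm s \<ge> 2 * real n" "\<And>s. Re s \<le> \<sigma> \<Longrightarrow> norm (Phi k s) \<le> B"
  shows "norm (Gfun n k s) \<le> 4 * fact (n - 1) * B / (norm s)^2"
proof -
  have "real n \<ge> 2" using assms(1) by simp
  then have ns: "norm s > 0" using assms(3) by linarith
  have p: "norm (pochhammer s n) \<ge> (norm s)^2 / 4" using poch_lower_far[OF assms(3,1)] .
  have pp: "(norm s)^2 / 4 > 0" using ns by simp
  have B: "norm (Phi k s) \<le> B" using assms by blast
  have B0: "B \<ge> 0" using B norm_ge_zero order_trans by blast
  have "norm (Gfun n k s) = fact (n - 1) * norm (Phi k s) / norm (pochhammer s n)"
    by (simp add: Gfun_def norm_divide norm_mult)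
  also have "\<dots> \<le> fact (n - 1) * B / ((norm s)^2 / 4)"
    using p pp B B0 by (intro frac_le mult_left_mono) auto
  also have "\<dots> = 4 * fact (n - 1) * B / (norm s)^2" by simp
  finally show ?thesis .
qed

lemma Gfun_bound_line:
  assumes "n \<ge> 2" "-1 < \<sigma>" "\<sigma> < 0" "\<And>s. Re s \<le> \<sigma> \<Longrightarrow> norm (Phi k s) \<le> B"
  shows "norm (Gfun n k (Complex \<sigma> t)) \<le> fact (n - 1) * B / (min (-\<sigma>) (1+\<sigma>))^n * inverse (1 + t^2)"
proof -
  define \<delta> where "\<delta> = min (-\<sigma>) (1+\<sigma>)"
  have d: "\<delta> > 0" using assms unfolding \<delta>_def by auto
  have p: "norm (pochhammer (Complex \<sigma> t) n) \<ge> \<delta>^n * (1 + t^2)"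
    using poch_lower_line[OF assms(2,3,1)] unfolding \<delta>_def .
  have pp: "\<delta>^n * (1 + t^2) > 0" using d by (simp add: add_pos_nonneg)
  have B: "norm (Phi k (Complex \<sigma> t)) \<le> B" using assms by simp
  have B0: "B \<ge> 0" using B norm_ge_zero order_trans by blast
  have "norm (Gfun n k (Complex \<sigma> t)) = fact (n - 1) * norm (Phi k (Complex \<sigma> t)) / norm (pochhammer (Complex \<sigma> t) n)"
    by (simp add: Gfun_def norm_divide norm_mult)
  also have "\<dots> \<le> fact (n - 1) * B / (\<delta>^n * (1 + t^2))"
    using p pp B B0 by (intro frac_le mult_left_mono) auto
  also have "\<dots> = fact (n - 1) * B / \<delta>^n * inverse (1 + t^2)" by (simp add: field_simps)
  finally show ?thesis unfolding \<delta>_def .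
qed

lemma Phi_at_int: "Phi k (- of_nat j) = 1 / (of_real (harm j)) ^ k"
proof -
  have e: "(1::complex) - (- of_nat j) = of_nat (Suc j)" by simp
  have "Phi k (- of_nat j) = 1 / (Digamma (of_nat (Suc j)) - Digamma 1)^k" unfolding Phi_def e ..
  also have "\<dots> = 1 / (harm j)^k" by (simp only: Digamma_of_nat Digamma_1) simp
  also have "(harm j :: complex) = of_real (harm j)" by (simp add: harm_def)
  finally show ?thesis .
qed



lemma rect_integral:
  assumes n: "n \<ge> 2" and \<sigma>: "-1 < \<sigma>" "\<sigma> < 0" and T: "T \<ge> 2 * real n + 1"
  shows "(Gfun n k has_contour_integral
     (of_real (2 * pi) * \<i> * (\<Sum>j\<in>{1..<n}. (-1)^j * of_nat ((n-1) choose j) * Phi k (- of_nat j))))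
     (rectpath (Complex (-T) (-T)) (Complex \<sigma> T))"
proof -
  define a1 where "a1 = Complex (-T) (-T)"
  define a3 where "a3 = Complex \<sigma> T"
  define S where "S = {s. Re s < \<sigma>/2}"
  have Tpos: "T > 0" using T by simp
  have convS: "convex S" unfolding S_def by (rule convex_halfspace_Re_lt)
  have openS: "open S" unfolding S_def by (rule open_halfspace_Re_lt)
  have PhiH: "Phi k holomorphic_on S" unfolding S_def using \<sigma> by (intro Phi_holo) simp
  have le: "Re a1 \<le> Re a3" "Im a1 \<le> Im a3" unfolding a1_def a3_def using \<sigma> T by auto
  have pimg: "x \<in> path_image (rectpath a1 a3) \<Longrightarrow> Re x \<le> \<sigma> \<and> -T \<le> Re x \<and> -T \<le> Im x \<and> Im x \<le> T" for x
    using path_image_rectpath_subset_cbox[OF le] unfolding a1_def a3_def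
    by (auto simp: in_cbox_complex_iff)
  have piS: "path_image (rectpath a1 a3) \<subseteq> S" unfolding S_def using pimg \<sigma> by fastforce
  have loop: "pathfinish (rectpath a1 a3) = pathstart (rectpath a1 a3)" by simp
  have pibox: "path_image (rectpath a1 a3) \<inter> box a1 a3 = {}" by (rule path_image_rectpath_inter_box[OF le])
  have inbox: "- of_nat j \<in> box a1 a3" if "j \<in> {1..<n}" for j
  proof -
    have "real j < T" using that T by simp
    moreover have "\<sigma> > - real j" using that \<sigma> by auto
    ultimately show ?thesis unfolding a1_def a3_def using Tpos by (auto simp: in_box_complex_iff)
  qed
  have nopole: "x + of_nat j \<noteq> 0" if x: "x \<in> path_image (rectpath a1 a3)" and j: "j < n" for x j
  proof
    assume x0: "x + of_nat j = 0"
    show False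
    proof (cases "j = 0")
      case True
      then have "x = 0" using x0 by simp
      then show False using pimg[OF x] \<sigma> by simp
    next
      case False
      then have "x = - of_nat j" using x0 by (simp add: add_eq_0_iff)
      then have "x \<in> box a1 a3" using inbox[of j] False j by simp
      then show False using pibox x by blast
    qed
  qed
  define I where "I j = (if j = 0 then 0 else of_real (2 * pi) * \<i> * Phi k (- of_nat j))" for j
  have intj: "((\<lambda>s. Phi k s / (s - (- of_nat j))) has_contour_integral I j) (rectpath a1 a3)" if j: "j < n" for j
  proof (cases "j = 0")
    case True
    have "(\<lambda>s. Phi k s / (s - (- of_nat j))) holomorphic_on S"
      using PhiH True \<sigma> unfolding S_def by (intro holomorphic_intros) auto
    then have "((\<lambda>s. Phi k s / (s - (- of_nat j))) has_contour_integral 0) (rectpath a1 a3)"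
      by (rule Cauchy_theorem_convex_simple[OF _ convS valid_path_rectpath piS]) simp
    then show ?thesis unfolding I_def using True by simp
  next
    case False
    have "- of_nat j \<in> S" unfolding S_def using False \<sigma> by auto
    then have z: "- of_nat j \<in> interior S" using interior_open[OF openS] by simp
    have sub: "path_image (rectpath a1 a3) \<subseteq> S - {- of_nat j}"
    proof
      fix x assume x: "x \<in> path_image (rectpath a1 a3)"
      have "x + of_nat j \<noteq> 0" by (rule nopole[OF x j])
      then have "x \<noteq> - of_nat j" by (cases "x = - of_nat j") simp_all
      then show "x \<in> S - {- of_nat j}" using piS x by auto
    qed
    have w: "winding_number (rectpath a1 a3) (- of_nat j) = 1"
      by (rule winding_number_rectpath) (use inbox[of j] False j in simp)
    show ?thesis
      using Cauchy_integral_formula_convex_simple[OF convS PhiH z valid_path_rectpath sub loop]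
      unfolding I_def w using False by simp
  qed
  define c where "c j = fact (n - 1) * cfp n j" for j
  have sum_int: "((\<lambda>s. \<Sum>j<n. c j * (Phi k s / (s - (- of_nat j)))) has_contour_integral (\<Sum>j<n. c j * I j)) (rectpath a1 a3)"
    by (intro has_contour_integral_sum has_contour_integral_lmul intj) auto
  have eqG: "(\<Sum>j<n. c j * (Phi k s / (s - (- of_nat j)))) = Gfun n k s" if s: "s \<in> path_image (rectpath a1 a3)" for s
  proof -
    have "1 / pochhammer s n = (\<Sum>j<n. cfp n j / (s + of_nat j))"
      using n nopole[OF s] by (intro partial_frac) auto
    then have "Gfun n k s = fact (n - 1) * Phi k s * (\<Sum>j<n. cfp n j / (s + of_nat j))"
      unfolding Gfun_def by (metis times_divide_eq_right mult_1_right)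
    also have "\<dots> = (\<Sum>j<n. c j * (Phi k s / (s - (- of_nat j))))"
      unfolding c_def by (simp add: sum_distrib_left mult_ac)
    finally show ?thesis by simp
  qed
  have G: "(Gfun n k has_contour_integral (\<Sum>j<n. c j * I j)) (rectpath a1 a3)"
    by (rule has_contour_integral_eq[OF sum_int eqG])
  have "(\<Sum>j<n. c j * I j) = (\<Sum>j\<in>{1..<n}. c j * I j)"
    by (rule sum.mono_neutral_right) (auto simp: I_def)
  also have "\<dots> = (\<Sum>j\<in>{1..<n}. of_real (2 * pi) * \<i> * ((-1)^j * of_nat ((n-1) choose j) * Phi k (- of_nat j)))"
  proof (intro sum.cong refl)
    fix j assume j: "j \<in> {1..<n}"
    have "c j = (-1)^j * of_nat ((n-1) choose j)" unfolding c_def using fact_cfp[of j n] j by simp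
    then show "c j * I j = of_real (2 * pi) * \<i> * ((-1)^j * of_nat ((n-1) choose j) * Phi k (- of_nat j))"
      using j by (simp add: I_def mult_ac)
  qed
  also have "\<dots> = of_real (2 * pi) * \<i> * (\<Sum>j\<in>{1..<n}. (-1)^j * of_nat ((n-1) choose j) * Phi k (- of_nat j))"
    by (simp add: sum_distrib_left)
  finally show ?thesis using G unfolding a1_def a3_def by simp
qed



lemma far_pt:
  assumes n: "n \<ge> 2" and B: "\<And>s. Re s \<le> \<sigma> \<Longrightarrow> norm (Phi k s) \<le> B"
    and T: "T \<ge> 2 * real n + 1" and x: "Re x \<le> \<sigma>" "norm x \<ge> T"
  shows "norm (Gfun n k x) \<le> 4 * fact (n - 1) * B / T^2"
proof -
  have B0: "B \<ge> 0" using B[OF x(1)] norm_ge_zero order_trans by blast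
  have Tp: "T > 0" using T by simp
  have "norm (Gfun n k x) \<le> 4 * fact (n - 1) * B / (norm x)^2"
    using x T by (intro Gfun_bound_far[OF n x(1) _ B]) auto
  also have "\<dots> \<le> 4 * fact (n - 1) * B / T^2"
    using x Tp B0 by (intro divide_left_mono power_mono mult_pos_pos) auto
  finally show ?thesis .
qed

lemma edges:
  assumes n: "n \<ge> 2" and \<sigma>: "-1 < \<sigma>" "\<sigma> < 0" and T: "T \<ge> 2 * real n + 1"
    and B: "\<And>s. Re s \<le> \<sigma> \<Longrightarrow> norm (Phi k s) \<le> B"
  shows "\<exists>E. norm E \<le> 16 * fact (n - 1) * B / T \<and>
     \<i> * integral {-T..T} (\<lambda>t. Gfun n k (Complex \<sigma> t)) + E =
     of_real (2 * pi) * \<i> * (\<Sum>j\<in>{1..<n}. (-1)^j * of_nat ((n-1) choose j) * Phi k (- of_nat j))"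
proof -
  define C where "C = of_real (2 * pi) * \<i> * (\<Sum>j\<in>{1..<n}. (-1)^j * of_nat ((n-1) choose j) * Phi k (- of_nat j))"
  define a1 where "a1 = Complex (-T) (-T)"
  define a2 where "a2 = Complex \<sigma> (-T)"
  define a3 where "a3 = Complex \<sigma> T"
  define a4 where "a4 = Complex (-T) T"
  define g where "g = Gfun n k"
  define K where "K = 4 * fact (n - 1) * B"
  have Tp: "T > 0" using T by simp
  have "real n \<ge> 2" using n by simp
  then have Ts: "-T \<le> \<sigma>" using T \<sigma> by linarith
  have B0: "B \<ge> 0" using B[of \<sigma>] norm_ge_zero order_trans by (metis Re_complex_of_real order_refl)
  have rp: "rectpath a1 a3 = linepath a1 a2 +++ (linepath a2 a3 +++ (linepath a3 a4 +++ linepath a4 a1))"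
    unfolding rectpath_def a1_def a2_def a3_def a4_def Let_def by simp
  have hc: "(g has_contour_integral C) (rectpath a1 a3)"
    unfolding g_def C_def a1_def a3_def by (rule rect_integral[OF n \<sigma> T])
  then have ci: "g contour_integrable_on (linepath a1 a2 +++ (linepath a2 a3 +++ (linepath a3 a4 +++ linepath a4 a1)))"
    unfolding rp[symmetric] by (rule has_contour_integral_integrable)
  have i1: "g contour_integrable_on linepath a1 a2" by (rule contour_integrable_joinD1[OF ci]) simp
  have r1: "g contour_integrable_on (linepath a2 a3 +++ (linepath a3 a4 +++ linepath a4 a1))"
    by (rule contour_integrable_joinD2[OF ci]) (auto intro!: valid_path_join)
  have i2: "g contour_integrable_on linepath a2 a3" by (rule contour_integrable_joinD1[OF r1]) simp
  have r2: "g contour_integrable_on (linepath a3 a4 +++ linepath a4 a1)"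
    by (rule contour_integrable_joinD2[OF r1]) (auto intro!: valid_path_join)
  have i3: "g contour_integrable_on linepath a3 a4" by (rule contour_integrable_joinD1[OF r2]) simp
  have i4: "g contour_integrable_on linepath a4 a1" by (rule contour_integrable_joinD2[OF r2]) simp
  have "C = contour_integral (rectpath a1 a3) g" using hc by (simp add: contour_integral_unique)
  also have "\<dots> = contour_integral (linepath a1 a2) g + contour_integral (linepath a2 a3) g +
      contour_integral (linepath a3 a4) g + contour_integral (linepath a4 a1) g"
    unfolding rp using i1 i2 i3 i4 r1 r2 by (simp add: valid_path_join)
  finally have Csplit: "C = contour_integral (linepath a1 a2) g + contour_integral (linepath a2 a3) g +
      contour_integral (linepath a3 a4) g + contour_integral (linepath a4 a1) g" .
  have right: "contour_integral (linepath a2 a3) g = \<i> * integral {-T..T} (\<lambda>t. g (Complex \<sigma> t))"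
    by (rule contour_integral_linepath_same_Re) (use Tp in \<open>auto simp: a2_def a3_def\<close>)
  have bnd: "norm (g x) \<le> K / T^2" if "Re x \<le> \<sigma>" "norm x \<ge> T" for x
    unfolding g_def K_def by (rule far_pt[OF n B T that])
  have KT: "K / T^2 \<ge> 0" unfolding K_def using B0 by simp
  have e1: "norm (contour_integral (linepath a1 a2) g) \<le> K / T^2 * T"
  proof -
    have "norm (contour_integral (linepath a1 a2) g) \<le> K / T^2 * norm (a2 - a1)"
    proof (rule contour_integral_bound_linepath[OF i1 KT])
      fix x assume "x \<in> closed_segment a1 a2"
      then have "Im x = -T" "Re x \<le> \<sigma>"
        using \<sigma> Tp Ts by (auto simp: a1_def a2_def closed_segment_same_Im closed_segment_eq_real_ivl split: if_splits)
      moreover from this have "norm x \<ge> T" using abs_Im_le_cmod[of x] by simp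
      ultimately show "norm (g x) \<le> K / T^2" using bnd by blast
    qed
    also have "norm (a2 - a1) = T + \<sigma>" using \<sigma> Tp T by (simp add: a1_def a2_def cmod_def)
    also have "K / T^2 * (T + \<sigma>) \<le> K / T^2 * T" using \<sigma> KT by (intro mult_left_mono) auto
    finally show ?thesis .
  qed
  have e3: "norm (contour_integral (linepath a3 a4) g) \<le> K / T^2 * T"
  proof -
    have "norm (contour_integral (linepath a3 a4) g) \<le> K / T^2 * norm (a4 - a3)"
    proof (rule contour_integral_bound_linepath[OF i3 KT])
      fix x assume "x \<in> closed_segment a3 a4"
      then have "Im x = T" "Re x \<le> \<sigma>"
        using \<sigma> Tp Ts by (auto simp: a3_def a4_def closed_segment_same_Im closed_segment_eq_real_ivl split: if_splits)
      moreover from this have "norm x \<ge> T" using abs_Im_le_cmod[of x] by simp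
      ultimately show "norm (g x) \<le> K / T^2" using bnd by blast
    qed
    also have "norm (a4 - a3) = T + \<sigma>" using \<sigma> Tp T by (simp add: a3_def a4_def cmod_def)
    also have "K / T^2 * (T + \<sigma>) \<le> K / T^2 * T" using \<sigma> KT by (intro mult_left_mono) auto
    finally show ?thesis .
  qed
  have e4: "norm (contour_integral (linepath a4 a1) g) \<le> K / T^2 * (2 * T)"
  proof -
    have "norm (contour_integral (linepath a4 a1) g) \<le> K / T^2 * norm (a1 - a4)"
    proof (rule contour_integral_bound_linepath[OF i4 KT])
      fix x assume "x \<in> closed_segment a4 a1"
      then have "Re x = -T" using Tp by (auto simp: a4_def a1_def closed_segment_same_Re)
      moreover from this have "norm x \<ge> T" using abs_Re_le_cmod[of x] by simp
      ultimately show "norm (g x) \<le> K / T^2" using bnd Ts by simp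
    qed
    also have "norm (a1 - a4) = 2 * T"
    proof -
      have "a1 - a4 = of_real (-(2 * T)) * \<i>" by (simp add: a1_def a4_def complex_eq_iff)
      then show ?thesis using Tp by (simp add: norm_mult)
    qed
    finally show ?thesis .
  qed
  define E where "E = contour_integral (linepath a1 a2) g + contour_integral (linepath a3 a4) g +
      contour_integral (linepath a4 a1) g"
  have "norm E \<le> K / T^2 * T + K / T^2 * T + K / T^2 * (2 * T)"
    unfolding E_def using e1 e3 e4 norm_triangle_le norm_triangle_ineq order_trans add_mono
    by (smt (verit, ccfv_threshold))
  also have "\<dots> = 16 * fact (n - 1) * B / T" using Tp unfolding K_def by (simp add: field_simps power2_eq_square)
  finally have En: "norm E \<le> 16 * fact (n - 1) * B / T" .
  have "\<i> * integral {-T..T} (\<lambda>t. Gfun n k (Complex \<sigma> t)) + E = C"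
    using Csplit right unfolding E_def g_def by simp
  then show ?thesis using En unfolding C_def by blast
qed



lemma line_result:
  assumes n: "n \<ge> 2" and \<sigma>: "-1 < \<sigma>" "\<sigma> < 0"
  shows "integrable lborel (\<lambda>t. Gfun n k (Complex \<sigma> t)) \<and>
    \<i> * (\<integral>t. Gfun n k (Complex \<sigma> t) \<partial>lborel) =
    of_real (2 * pi) * \<i> * (\<Sum>j\<in>{1..<n}. (-1)^j * of_nat ((n-1) choose j) * Phi k (- of_nat j))"
proof -
  obtain B where B: "B > 0" "\<And>s. Re s \<le> \<sigma> \<Longrightarrow> norm (Phi k s) \<le> B"
    using Phi_bound[OF \<sigma>(2)] by blast
  define g where "g t = Gfun n k (Complex \<sigma> t)" for t
  define C where "C = of_real (2 * pi) * \<i> * (\<Sum>j\<in>{1..<n}. (-1)^j * of_nat ((n-1) choose j) * Phi k (- of_nat j))"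
  define S where "S = {s. Re s < \<sigma>/2} - {s. \<exists>j<n. s = - of_nat j}"
  have hol: "Gfun n k holomorphic_on S" unfolding S_def using \<sigma> by (intro Gfun_holo) simp
  have img: "(\<lambda>t. Complex \<sigma> t) ` UNIV \<subseteq> S"
  proof
    fix s assume "s \<in> (\<lambda>t. Complex \<sigma> t) ` UNIV"
    then obtain t where s: "s = Complex \<sigma> t" by auto
    have "s \<noteq> - of_nat j" for j :: nat
    proof
      assume "s = - of_nat j"
      then have "\<sigma> = - real j" using s by (simp add: complex_eq_iff)
      then show False using \<sigma> by (cases j) auto
    qed
    then show "s \<in> S" unfolding S_def using s \<sigma> by auto
  qed
  have cC: "continuous_on UNIV (\<lambda>t. Complex \<sigma> t)"
    unfolding Complex_eq by (intro continuous_intros)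
  have cont: "continuous_on UNIV g"
    unfolding g_def by (rule continuous_on_compose2[OF holomorphic_on_imp_continuous_on[OF hol] cC img])
  have meas: "g \<in> borel_measurable lborel"
    using borel_measurable_continuous_onI[OF cont] by simp
  define \<delta> where "\<delta> = min (-\<sigma>) (1+\<sigma>)"
  define D where "D = fact (n - 1) * B / \<delta>^n"
  have D0: "D \<ge> 0" unfolding D_def \<delta>_def using B \<sigma> by simp
  have ib: "integrable lborel (\<lambda>t::real. inverse (1 + t^2))"
    using integrable_inverse_1_plus_square by (simp add: set_integrable_def einterval_iff)
  have integ: "integrable lborel g"
  proof (rule Bochner_Integration.integrable_bound[OF integrable_mult_right[OF ib, of D] meas])
    show "AE t in lborel. norm (g t) \<le> norm (D * inverse (1 + t^2))"
    proof (intro AE_I2)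
      fix t :: real
      have "norm (g t) \<le> D * inverse (1 + t^2)"
        unfolding g_def D_def \<delta>_def by (rule Gfun_bound_line[OF n \<sigma> B(2)])
      also have "\<dots> = norm (D * inverse (1 + t^2))" using D0 by (simp add: abs_mult add_pos_nonneg)
      finally show "norm (g t) \<le> norm (D * inverse (1 + t^2))" .
    qed
  qed
  define Tm where "Tm m = real m + (2 * real n + 1)" for m :: nat
  have "\<forall>m. \<exists>E. norm E \<le> 16 * fact (n - 1) * B / Tm m \<and> \<i> * integral {-Tm m..Tm m} g + E = C"
  proof
    fix m
    have "Tm m \<ge> 2 * real n + 1" unfolding Tm_def by simp
    from edges[OF n \<sigma> this B(2)]
    show "\<exists>E. norm E \<le> 16 * fact (n - 1) * B / Tm m \<and> \<i> * integral {-Tm m..Tm m} g + E = C"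
      unfolding g_def C_def .
  qed
  then have "\<exists>E. \<forall>m. norm (E m) \<le> 16 * fact (n - 1) * B / Tm m \<and> \<i> * integral {-Tm m..Tm m} g + E m = C"
    by (rule choice)
  then obtain E where E0: "\<forall>m. norm (E m) \<le> 16 * fact (n - 1) * B / Tm m \<and> \<i> * integral {-Tm m..Tm m} g + E m = C"
    by blast
  have E: "\<And>m. norm (E m) \<le> 16 * fact (n - 1) * B / Tm m"
      "\<And>m. \<i> * integral {-Tm m..Tm m} g + E m = C"
    using E0 by auto
  have lim1: "(\<lambda>m. integral {-Tm m..Tm m} g) \<longlonglongrightarrow> (\<integral>t. g t \<partial>lborel)"
  proof -
    have eq: "integral {-Tm m..Tm m} g = (\<integral>t. indicator {-Tm m..Tm m} t *\<^sub>R g t \<partial>lborel)" for m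
    proof -
      have "set_integrable lborel {-Tm m..Tm m} g"
        unfolding set_integrable_def by (rule integrable_mult_indicator[OF _ integ]) simp
      then show ?thesis using set_borel_integral_eq_integral(2) by (metis set_lebesgue_integral_def)
    qed
    have "(\<lambda>m. (\<integral>t. indicator {-Tm m..Tm m} t *\<^sub>R g t \<partial>lborel)) \<longlonglongrightarrow> (\<integral>t. g t \<partial>lborel)"
    proof (rule integral_dominated_convergence[where w="\<lambda>t. norm (g t)"])
      show "g \<in> borel_measurable lborel" by (rule meas)
      show "(\<lambda>t. indicator {-Tm m..Tm m} t *\<^sub>R g t) \<in> borel_measurable lborel" for m
        using meas by simp
      show "integrable lborel (\<lambda>t. norm (g t))" using integ by simp
      show "AE t in lborel. (\<lambda>m. indicator {-Tm m..Tm m} t *\<^sub>R g t) \<longlonglongrightarrow> g t"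
      proof (intro AE_I2 tendsto_eventually)
        fix t :: real
        have "\<forall>m\<ge>nat \<lceil>\<bar>t\<bar>\<rceil>. indicator {-Tm m..Tm m} t *\<^sub>R g t = g t"
        proof (intro allI impI)
          fix m assume "m \<ge> nat \<lceil>\<bar>t\<bar>\<rceil>"
          then have "real m \<ge> \<bar>t\<bar>" by linarith
          then have "t \<in> {-Tm m..Tm m}" unfolding Tm_def by auto
          then show "indicator {-Tm m..Tm m} t *\<^sub>R g t = g t" by simp
        qed
        then show "\<forall>\<^sub>F m in sequentially. indicator {-Tm m..Tm m} t *\<^sub>R g t = g t"
          unfolding eventually_sequentially by blast
      qed
      show "AE t in lborel. norm (indicator {-Tm m..Tm m} t *\<^sub>R g t) \<le> norm (g t)" for m
        by (intro AE_I2) (simp add: indicator_def)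
    qed
    then show ?thesis unfolding eq .
  qed
  have lim2: "E \<longlonglongrightarrow> 0"
  proof (rule Lim_null_comparison)
    show "\<forall>\<^sub>F m in sequentially. norm (E m) \<le> 16 * fact (n - 1) * B / real m"
    proof (rule eventually_sequentiallyI[of 1])
      fix m :: nat assume m: "m \<ge> 1"
      have "16 * fact (n - 1) * B / Tm m \<le> 16 * fact (n - 1) * B / real m"
        using m B(1) unfolding Tm_def by (intro divide_left_mono) auto
      then show "norm (E m) \<le> 16 * fact (n - 1) * B / real m" using E(1)[of m] by linarith
    qed
    show "(\<lambda>m. 16 * fact (n - 1) * B / real m) \<longlonglongrightarrow> 0" by (rule lim_const_over_n)
  qed
  have l1: "(\<lambda>m. \<i> * integral {-Tm m..Tm m} g) \<longlonglongrightarrow> C - 0"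
  proof -
    have "(\<lambda>m. C - E m) \<longlonglongrightarrow> C - 0" by (intro tendsto_intros lim2)
    moreover have "C - E m = \<i> * integral {-Tm m..Tm m} g" for m using E(2)[of m] by (simp add: algebra_simps)
    ultimately show ?thesis by simp
  qed
  have l2: "(\<lambda>m. \<i> * integral {-Tm m..Tm m} g) \<longlonglongrightarrow> \<i> * (\<integral>t. g t \<partial>lborel)"
    by (intro tendsto_intros lim1)
  have "\<i> * (\<integral>t. g t \<partial>lborel) = C - 0" by (rule LIMSEQ_unique[OF l2 l1])
  then have "\<i> * (\<integral>t. g t \<partial>lborel) = C" by simp
  then show ?thesis using integ unfolding g_def C_def by simp
qed

lemma F_eq:
  assumes \<sigma>: "-1 < \<sigma>" "\<sigma> < 0" and n: "n \<ge> 1"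
  shows "Gamma (Complex \<sigma> t) * Gamma (of_nat n) / Gamma (of_nat n + Complex \<sigma> t) /
      (Digamma (1 - Complex \<sigma> t) - Digamma 1) ^ k = Gfun n k (Complex \<sigma> t)"
proof -
  define s where "s = Complex \<sigma> t"
  have nint: "s \<notin> \<int>\<^sub>\<le>\<^sub>0"
  proof
    assume "s \<in> \<int>\<^sub>\<le>\<^sub>0"
    then obtain m :: nat where "s = - of_nat m" by (elim nonpos_Ints_cases')
    then have "\<sigma> = - real m" unfolding s_def by (simp add: complex_eq_iff)
    then show False using \<sigma> by (cases m) auto
  qed
  have p: "pochhammer s n = Gamma (s + of_nat n) / Gamma s" by (rule pochhammer_Gamma[OF nint])
  have g0: "Gamma s \<noteq> 0" by (rule Gamma_nonzero[OF nint])
  have p0: "pochhammer s n \<noteq> 0"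
  proof
    assume "pochhammer s n = 0"
    then obtain j where "s = - of_nat j" by (auto simp: pochhammer_eq_0_iff)
    then show False using nint by auto
  qed
  have gf: "Gamma (of_nat n :: complex) = fact (n - 1)"
    using Gamma_fact[of "n - 1"] n by (simp add: of_nat_diff)
  have gsn: "Gamma (of_nat n + s) = pochhammer s n * Gamma s" using p g0 by (simp add: add.commute)
  have dnz: "(Digamma (1 - s) - Digamma 1) ^ k \<noteq> 0" using Phi_nonzero_denom[of s] \<sigma> unfolding s_def by simp
  show ?thesis unfolding s_def[symmetric] Gfun_def Phi_def gf gsn
    using g0 p0 dnz by (simp add: field_simps)
qed


theorem mainTheorem5:
  fixes k n :: nat and \<sigma> :: real
  assumes "k \<ge> 1" and "n \<ge> 2" and "-1 < \<sigma>" and "\<sigma> < 0"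
  defines "F \<equiv> (\<lambda>s::complex. (Gamma s * Gamma (of_nat n) / Gamma (of_nat n + s))
                 / (Digamma (1 - s) - Digamma 1) ^ k)"
  shows "integrable lborel (\<lambda>t::real. F (Complex \<sigma> t)) \<and>
         complex_of_real (D_moment n k) =
           - (of_nat (fact k) / (2 * of_real pi * \<i>)) *
             (\<i> * (\<integral>t. F (Complex \<sigma> t) \<partial>lborel))"
proof -
  have n1: "n \<ge> 1" using assms(2) by simp
  have Feq: "(\<lambda>t. F (Complex \<sigma> t)) = (\<lambda>t. Gfun n k (Complex \<sigma> t))"
    unfolding F_def using F_eq[OF assms(3,4) n1] by simp
  have LR: "integrable lborel (\<lambda>t. Gfun n k (Complex \<sigma> t)) \<and>
    \<i> * (\<integral>t. Gfun n k (Complex \<sigma> t) \<partial>lborel) =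
    of_real (2 * pi) * \<i> * (\<Sum>j\<in>{1..<n}. (-1)^j * of_nat ((n-1) choose j) * Phi k (- of_nat j))"
    by (rule line_result[OF assms(2,3,4)])
  define X where "X = (\<Sum>j\<in>{1..<n}. (-1)^(j+1) * of_nat ((n-1) choose j) / (of_real (harm j) :: complex)^k)"
  have integ: "integrable lborel (\<lambda>t::real. F (Complex \<sigma> t))" using Feq LR by simp
  have S_eq: "(\<Sum>j\<in>{1..<n}. (-1)^j * of_nat ((n-1) choose j) * Phi k (- of_nat j)) = - X"
    unfolding X_def sum_negf[symmetric] by (intro sum.cong refl) (simp add: Phi_at_int)
  have I: "\<i> * (\<integral>t. F (Complex \<sigma> t) \<partial>lborel) = of_real (2 * pi) * \<i> * (- X)"
    using Feq LR S_eq by simp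
  have D: "complex_of_real (D_moment n k) = of_nat (fact k) * X"
    unfolding X_def using assms(2) by (simp add: D_moment_closed[OF n1] bb_def of_real_sum)
  have pz: "(of_real pi :: complex) \<noteq> 0" by simp
  have "- (of_nat (fact k) / (2 * of_real pi * \<i>)) * (of_real (2 * pi) * \<i> * (- X)) = of_nat (fact k) * X"
    using pz by (simp add: field_simps)
  then show ?thesis using integ I D by simp
qed

end
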